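(* Let $n\ge 2$ be an integer and let $p$ be a real polynomial of degree at most $n-2$ that is non-negative on $[-1,1]$ and satisfies $p(1)=1$. Then $$\max_{x\in[-1,1]}|(1-x)^2p(x)|\ \ge\ \frac{16}{n^2}\tan^2\!\left(\frac{\pi}{2n}\right).$$ Moreover, equality holds if and only if $$p(x)=S_{n-2}(x):=\frac{8}{n^2}\tan^2\!\left(\frac{\pi}{2n}\right)\frac{1}{(1-x)^2}\left(1+T_n\!\left(\frac{1+\cos(\pi/n)}{2}(x+1)-1\right)\right).$$
   Context: $T_n$ denotes the Chebyshev polynomial of the first kind of degree $n$, $T_n(\cos\theta)=\cos(n\theta)$. The expression defining $S_{n-2}$ is a polynomial (the singularity at $x=1$ is removable). *)

theory Defs
  imports "HOL-Analysis.Analysis" "HOL-Computational_Algebra.Polynomial"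
begin

fun cheb_T :: "nat \<Rightarrow> real poly" where
  "cheb_T 0 = 1"
| "cheb_T (Suc 0) = [:0, 1:]"
| "cheb_T (Suc (Suc n)) = [:0, 2:] * cheb_T (Suc n) - cheb_T n"

text \<open>The extremal polynomial S_{n-2}: the numerator polynomial divided by (1-x)^2
  (the division is exact, the singularity at x = 1 being removable).\<close>
definition S_extr :: "nat \<Rightarrow> real poly" where
  "S_extr n =
     (let a = (1 + cos (pi / real n)) / 2;
          c = 8 / (real n)^2 * (tan (pi / (2 * real n)))^2
      in smult c (1 + pcompose (cheb_T n) [:a - 1, a:]) div ([:1, -1:]^2))"

end

theory Submission
  imports Defs
begin

lemma cheb_cos: "poly (cheb_T n) (cos t) = cos (real n * t)"
proof (induction n rule: cheb_T.induct)
  case 1 then show ?case by simp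
next
  case 2 then show ?case by simp
next
  case (3 n)
  have "cos (real (Suc (Suc n)) * t) = 2 * cos t * cos (real (Suc n) * t) - cos (real n * t)"
    using cos_add[of "real (Suc n) * t" t] cos_diff[of "real (Suc n) * t" t]
    by (simp add: algebra_simps)
  then show ?case using 3 by simp
qed

lemma degree_cheb: "degree (cheb_T n) \<le> n"
proof (induction n rule: cheb_T.induct)
  case (3 n)
  have "degree ([:0, 2:] * cheb_T (Suc n)) \<le> Suc (Suc n)"
    by (rule order.trans[OF degree_mult_le]) (use 3 in auto)
  moreover have "degree (cheb_T n) \<le> Suc (Suc n)" using 3 by simp
  ultimately show ?case by (simp add: degree_diff_le)
qed auto

lemma deriv_eq:
  assumes "\<And>t. f t = g t" "DERIV f t :> A" "DERIV g t :> B"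
  shows "A = B"
proof -
  have "f = g" using assms(1) by auto
  thus ?thesis using assms DERIV_unique by metis
qed

lemma cheb_d1: "poly (pderiv (cheb_T n)) (cos t) * sin t = real n * sin (real n * t)"
proof -
  have d1: "DERIV (\<lambda>t. poly (cheb_T n) (cos t)) t :> poly (pderiv (cheb_T n)) (cos t) * (- sin t)"
    by (rule DERIV_chain2[OF poly_DERIV]) (auto intro!: derivative_eq_intros)
  have d2: "DERIV (\<lambda>t. cos (real n * t)) t :> - sin (real n * t) * (real n * 1)"
    by (rule DERIV_chain2[where f=cos]) (auto intro!: derivative_eq_intros)
  have "poly (pderiv (cheb_T n)) (cos t) * (- sin t) = - sin (real n * t) * (real n * 1)"
    by (rule deriv_eq[OF _ d1 d2]) (rule cheb_cos)
  thus ?thesis by simp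
qed

lemma cheb_d2: "poly (pderiv (pderiv (cheb_T n))) (cos t) * (- sin t) * sin t + poly (pderiv (cheb_T n)) (cos t) * cos t
   = real n ^ 2 * cos (real n * t)"
  apply (rule deriv_eq[where f="\<lambda>t. poly (pderiv (cheb_T n)) (cos t) * sin t" and g="\<lambda>t. real n * sin (real n * t)" and t=t])
    apply (rule cheb_d1)
   apply (rule derivative_eq_intros)
      apply (rule DERIV_chain2[OF poly_DERIV])
  apply (auto intro!: derivative_eq_intros simp: power2_eq_square)
  done

definition aa :: "nat \<Rightarrow> real" where "aa n = (1 + cos (pi / real n)) / 2"
definition cc :: "nat \<Rightarrow> real" where "cc n = 8 / (real n)^2 * (tan (pi / (2 * real n)))^2"
definition FF :: "nat \<Rightarrow> real poly" where
  "FF n = smult (cc n) (1 + pcompose (cheb_T n) [:aa n - 1, aa n:])"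

lemma S_extr_FF: "S_extr n = FF n div [:1, -1:]^2"
  unfolding S_extr_def FF_def aa_def cc_def Let_def by simp

lemma basic:
  assumes "n \<ge> 2"
  shows "0 < pi / real n" "pi / real n \<le> pi / 2" "sin (pi / real n) > 0" "cos (pi / real n) \<ge> 0"
    "aa n > 0" "cc n > 0" "aa n = cos (pi / (2 * real n))^2"
proof -
  have n: "real n \<ge> 2" using assms by simp
  show 1: "0 < pi / real n" using n by simp
  show 2: "pi / real n \<le> pi / 2" by (rule divide_left_mono) (use n in auto)
  show 3: "sin (pi / real n) > 0" using 1 2 pi_gt_zero by (intro sin_gt_zero) linarith+
  show 4: "cos (pi / real n) \<ge> 0" using 1 2 by (intro cos_ge_zero) auto
  show "aa n > 0" using 4 by (simp add: aa_def)
  have h1: "0 < pi / (2 * real n)" using n by simp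
  have "pi / (2 * real n) = (pi / real n) / 2" by simp
  then have h2: "pi / (2 * real n) < pi / 2" using 2 pi_gt_zero by linarith
  have "tan (pi / (2 * real n)) > 0" using h1 h2 by (intro tan_gt_zero) auto
  then show "cc n > 0" using n by (simp add: cc_def)
  have "pi / real n = 2 * (pi / (2 * real n))" using n by simp
  then show "aa n = cos (pi / (2 * real n))^2"
    unfolding aa_def by (metis cos_double_cos add.commute add_diff_cancel_left' diff_add_cancel nonzero_mult_div_cancel_left zero_neq_numeral)
qed

lemma poly_FF: "poly (FF n) x = cc n * (1 + poly (cheb_T n) (aa n * (x + 1) - 1))"
  by (simp add: FF_def poly_pcompose algebra_simps)

definition xk :: "nat \<Rightarrow> nat \<Rightarrow> real" where
  "xk n k = (cos (real k * pi / real n) + 1) / aa n - 1"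

lemma FF_xk:
  assumes "n \<ge> 2"
  shows "poly (FF n) (xk n k) = cc n * (1 + (-1)^k)"
proof -
  have "aa n * (xk n k + 1) - 1 = cos (real k * pi / real n)"
    using basic(5)[OF assms] by (simp add: xk_def)
  moreover have "real n * (real k * pi / real n) = real k * pi" using assms by simp
  ultimately show ?thesis by (simp add: poly_FF cheb_cos cos_int_times_real[of k pi] )
qed

lemma xk_1: assumes "n \<ge> 2" shows "xk n 1 = 1"
  using basic(5)[OF assms] by (simp add: xk_def aa_def field_simps)

lemma FF_1: assumes "n \<ge> 2" shows "poly (FF n) 1 = 0"
  using FF_xk[OF assms, of 1] xk_1[OF assms] by simp

lemma pderiv_FF: "pderiv (FF n) = smult (cc n * aa n) (pcompose (pderiv (cheb_T n)) [:aa n - 1, aa n:])"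
  by (simp add: FF_def pderiv_smult pderiv_add pderiv_pcompose pderiv_pCons)

lemma pderiv2_FF: "pderiv (pderiv (FF n)) = smult (cc n * aa n * aa n) (pcompose (pderiv (pderiv (cheb_T n))) [:aa n - 1, aa n:])"
  by (simp add: pderiv_FF pderiv_smult pderiv_pcompose pderiv_pCons)

lemma L1: "poly [:aa n - 1, aa n:] 1 = cos (pi / real n)"
  by (simp add: aa_def field_simps)

lemma dFF_1: assumes "n \<ge> 2" shows "poly (pderiv (FF n)) 1 = 0"
proof -
  have "poly (pderiv (cheb_T n)) (cos (pi / real n)) * sin (pi / real n) = 0"
    using cheb_d1[of n "pi / real n"] assms by simp
  then have "poly (pderiv (cheb_T n)) (cos (pi / real n)) = 0" using basic(3)[OF assms] by simp
  then show ?thesis by (simp add: pderiv_FF poly_pcompose L1 del: poly_pCons)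
qed

lemma ddFF_1: assumes "n \<ge> 2" shows "poly (pderiv (pderiv (FF n))) 1 = 2"
proof -
  define t where "t = pi / real n"
  define h where "h = pi / (2 * real n)"
  have th: "t = 2 * h" unfolding t_def h_def by simp
  have n: "real n \<ge> 2" using assms by simp
  have d1: "poly (pderiv (cheb_T n)) (cos t) = 0"
    using cheb_d1[of n t] assms basic(3)[OF assms] by (simp add: t_def)
  have "poly (pderiv (pderiv (cheb_T n))) (cos t) * (- sin t) * sin t = - ((real n)^2)"
    using cheb_d2[of n t] d1 assms by (simp add: t_def)
  then have T2: "poly (pderiv (pderiv (cheb_T n))) (cos t) * (sin t)^2 = (real n)^2"
    by (simp add: power2_eq_square algebra_simps)
  have h1: "0 < h" using n by (simp add: h_def)
  have "h = t / 2" using th by simp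
  then have h2: "h < pi / 2" using basic(2)[OF assms] pi_gt_zero unfolding t_def by (smt (verit) field_sum_of_halves)
  have sh: "sin h > 0" using h1 h2 pi_gt_zero by (intro sin_gt_zero) linarith+
  have ch: "cos h > 0" using h1 h2 by (intro cos_gt_zero) linarith+
  have st: "sin t = 2 * sin h * cos h" using th sin_double by simp
  have a: "aa n = (cos h)^2" using basic(7)[OF assms] by (simp add: h_def)
  have c: "cc n = 8 / (real n)^2 * (sin h / cos h)^2" by (simp add: cc_def h_def tan_def)
  have T2': "poly (pderiv (pderiv (cheb_T n))) (cos t) = (real n)^2 / (4 * (sin h)^2 * (cos h)^2)"
    using T2 sh ch unfolding st by (simp add: field_simps power2_eq_square)
  have "poly (pderiv (pderiv (FF n))) 1 = cc n * aa n * aa n * poly (pderiv (pderiv (cheb_T n))) (cos t)"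
    by (simp add: pderiv2_FF poly_pcompose L1 t_def del: poly_pCons)
  also have "\<dots> = 2" unfolding T2' a c using sh ch n by (simp add: field_simps power2_eq_square)
  finally show ?thesis .
qed

lemma double_root_dvd:
  fixes F :: "real poly"
  assumes "poly F 1 = 0" "poly (pderiv F) 1 = 0"
  shows "\<exists>H. F = [:1, -1:]^2 * H"
proof -
  obtain G where G: "F = [:-1, 1:] * G" using assms(1) poly_eq_0_iff_dvd[of F 1] by (auto simp: dvd_def)
  have "pderiv F = [:-1, 1:] * pderiv G + G * pderiv [:-1, 1:]" by (simp only: G pderiv_mult)
  also have "pderiv [:-1, 1:] = (1 :: real poly)" by (simp add: pderiv_pCons)
  finally have "pderiv F = [:-1, 1:] * pderiv G + G" by simp
  then have "poly G 1 = 0" using assms(2) by simp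
  then obtain H where H: "G = [:-1, 1:] * H" using poly_eq_0_iff_dvd[of G 1] by (auto simp: dvd_def)
  have "[:1, -1:]^2 = ([:-1, 1:]^2 :: real poly)" by (simp add: power2_eq_square)
  then show ?thesis using G H by (metis power2_eq_square mult.assoc)
qed

lemma S_FF: assumes "n \<ge> 2" shows "FF n = [:1, -1:]^2 * S_extr n"
proof -
  obtain H where H: "FF n = [:1, -1:]^2 * H" using double_root_dvd FF_1 dFF_1 assms by blast
  have "[:1, -1:]^2 \<noteq> (0 :: real poly)" by simp
  then have "S_extr n = H" unfolding S_extr_FF H by simp
  then show ?thesis using H by simp
qed

lemma dd_aux:
  fixes u S :: "real poly"
  assumes "pderiv u = [:-1:]" "poly u 1 = 0"
  shows "poly (pderiv (pderiv (u * u * S))) 1 = 2 * poly S 1"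
proof -
  have u': "pderiv u = -1" using assms(1) by (metis minus_pCons neg_equal_zero one_pCons)
  have "pderiv (u * u * S) = u * u * pderiv S - (u * S + u * S)"
    by (simp add: pderiv_mult u' algebra_simps)
  then have "pderiv (pderiv (u * u * S)) = pderiv (u * u * pderiv S) - (pderiv (u * S) + pderiv (u * S))"
    by (simp only: pderiv_diff pderiv_add)
  also have "pderiv (u * u * pderiv S) = u * u * pderiv (pderiv S) - (u * pderiv S + u * pderiv S)"
    by (simp add: pderiv_mult u' algebra_simps)
  also have "pderiv (u * S) = u * pderiv S - S"
    by (simp add: pderiv_mult u')
  finally show ?thesis using assms(2) by simp
qed

lemma S_1: assumes "n \<ge> 2" shows "poly (S_extr n) 1 = 1"
proof -
  have "poly (pderiv (pderiv (FF n))) 1 = 2 * poly (S_extr n) 1"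
    unfolding S_FF[OF assms] power2_eq_square
    by (rule dd_aux) (simp_all add: pderiv_pCons)
  then show ?thesis using ddFF_1[OF assms] by simp
qed

lemma degree_FF: "degree (FF n) \<le> n"
proof -
  have "degree (pcompose (cheb_T n) [:aa n - 1, aa n:]) \<le> n"
    using degree_cheb[of n] by (simp add: degree_pcompose)
  then show ?thesis unfolding FF_def
    by (metis degree_add_le degree_1 degree_smult_le le0 order.trans)
qed

lemma degree_S: assumes "n \<ge> 2" shows "degree (S_extr n) \<le> n - 2"
proof (cases "S_extr n = 0")
  case False
  have "degree (FF n) = 2 + degree (S_extr n)"
    using S_FF[OF assms] False by (simp add: degree_mult_eq degree_power_eq)
  then show ?thesis using degree_FF[of n] by simp
qed simp

lemma interp:
  fixes g :: "real poly" and K :: "nat set" and x :: "nat \<Rightarrow> real"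
  assumes fin: "finite K" and inj: "inj_on x K" and deg: "degree g < card K"
  shows "poly g z = (\<Sum>k\<in>K. poly g (x k) * (\<Prod>j\<in>K-{k}. (z - x j) / (x k - x j)))"
proof -
  define I where "I = (\<Sum>k\<in>K. smult (poly g (x k) / (\<Prod>j\<in>K-{k}. (x k - x j))) (\<Prod>j\<in>K-{k}. [:- x j, 1:]))"
  have polyI: "poly I y = (\<Sum>k\<in>K. poly g (x k) * (\<Prod>j\<in>K-{k}. (y - x j) / (x k - x j)))" for y
    unfolding I_def by (simp add: poly_sum poly_prod prod_dividef)
  have degI: "degree I \<le> card K - 1"
    unfolding I_def
  proof (rule degree_sum_le)
    fix k assume k: "k \<in> K"
    have "degree (\<Prod>j\<in>K-{k}. [:- x j, 1:]) \<le> (\<Sum>j\<in>K-{k}. degree [:- x j, 1:])"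
      using degree_prod_sum_le[of "K-{k}" "\<lambda>j. [:- x j, 1:]"] fin by (simp add: o_def)
    also have "\<dots> = card (K - {k})" by simp
    also have "\<dots> = card K - 1" using k fin by simp
    finally show "degree (smult (poly g (x k) / (\<Prod>j\<in>K-{k}. (x k - x j))) (\<Prod>j\<in>K-{k}. [:- x j, 1:])) \<le> card K - 1"
      by (rule order.trans[OF degree_smult_le])
  qed (use fin in auto)
  have nodes: "poly I (x m) = poly g (x m)" if m: "m \<in> K" for m
  proof -
    have "poly I (x m) = poly g (x m) * (\<Prod>j\<in>K-{m}. (x m - x j) / (x m - x j))
        + (\<Sum>k\<in>K-{m}. poly g (x k) * (\<Prod>j\<in>K-{k}. (x m - x j) / (x k - x j)))"
      unfolding polyI by (rule sum.remove[OF fin m])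
    also have "(\<Prod>j\<in>K-{m}. (x m - x j) / (x m - x j)) = 1"
    proof (rule prod.neutral, intro ballI)
      fix j assume "j \<in> K - {m}"
      then have "x m \<noteq> x j" using inj m by (auto dest: inj_onD)
      then show "(x m - x j) / (x m - x j) = 1" by simp
    qed
    also have "(\<Sum>k\<in>K-{m}. poly g (x k) * (\<Prod>j\<in>K-{k}. (x m - x j) / (x k - x j))) = 0"
    proof (rule sum.neutral, intro ballI)
      fix k assume k: "k \<in> K - {m}"
      have "(\<Prod>j\<in>K-{k}. (x m - x j) / (x k - x j)) = 0"
        using fin k m by (intro prod_zero) (auto intro!: bexI[of _ m])
      then show "poly g (x k) * (\<Prod>j\<in>K-{k}. (x m - x j) / (x k - x j)) = 0" by simp
    qed
    finally show ?thesis by simp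
  qed
  have cardA: "card (x ` K) = card K" using card_image[OF inj] .
  have gI: "g = I"
  proof (rule poly_eqI_degree[where A="x ` K"])
    show "\<And>y. y \<in> x ` K \<Longrightarrow> poly g y = poly I y" using nodes by auto
    show "degree g < card (x ` K)" using cardA deg by simp
    show "degree I < card (x ` K)" using cardA degI deg by linarith
  qed
  have "poly g z = poly I z" using gI by simp
  also have "\<dots> = (\<Sum>k\<in>K. poly g (x k) * (\<Prod>j\<in>K-{k}. (z - x j) / (x k - x j)))" by (rule polyI)
  finally show ?thesis .
qed

lemma xk_mono:
  assumes "n \<ge> 2" "j < k" "k \<le> n"
  shows "xk n k < xk n j"
proof -
  have n: "real n > 0" using assms by simp
  have "cos (real k * pi / real n) < cos (real j * pi / real n)"
  proof (rule cos_monotone_0_pi)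
    show "0 \<le> real j * pi / real n" using n by simp
    show "real j * pi / real n < real k * pi / real n" using assms n by (simp add: divide_strict_right_mono)
    have "real k * pi / real n \<le> real n * pi / real n" using assms n by (intro divide_right_mono) auto
    then show "real k * pi / real n \<le> pi" using n by simp
  qed
  then show ?thesis using basic(5)[OF assms(1)] unfolding xk_def by (simp add: divide_strict_right_mono)
qed

lemma xk_n: assumes "n \<ge> 2" shows "xk n n = -1"
  using assms by (simp add: xk_def)

lemma xk_range:
  assumes "n \<ge> 2" "1 \<le> k" "k \<le> n"
  shows "-1 \<le> xk n k" "xk n k \<le> 1"
proof -
  show "-1 \<le> xk n k" using xk_mono[OF assms(1), of k n] xk_n[OF assms(1)] assms by (cases "k = n") auto
  show "xk n k \<le> 1" using xk_mono[OF assms(1), of 1 k] xk_1[OF assms(1)] assms by (cases "k = 1") auto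
qed

lemma sign_P:
  assumes "n \<ge> 2" "k \<in> {2..n}"
  shows "(-1)^k * (\<Prod>j\<in>{2..n}-{k}. (1 - xk n j) / (xk n k - xk n j)) > 0"
proof -
  let ?f = "\<lambda>j. (1 - xk n j) / (xk n k - xk n j)"
  have k: "2 \<le> k" "k \<le> n" using assms by auto
  have split: "{2..n}-{k} = {2..<k} \<union> {k<..n}" using k by auto
  have P: "(\<Prod>j\<in>{2..n}-{k}. ?f j) = (\<Prod>j\<in>{2..<k}. ?f j) * (\<Prod>j\<in>{k<..n}. ?f j)"
    unfolding split by (rule prod.union_disjoint) auto
  have one: "xk n j < 1" if "2 \<le> j" "j \<le> n" for j
    using xk_mono[OF assms(1), of 1 j] xk_1[OF assms(1)] that by auto
  have A: "(\<Prod>j\<in>{2..<k}. ?f j) = (-1)^(k-2) * (\<Prod>j\<in>{2..<k}. - ?f j)"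
    using prod_uminus[of "\<lambda>j. - ?f j" "{2..<k}"] by simp
  have Apos: "(\<Prod>j\<in>{2..<k}. - ?f j) > 0"
  proof (rule prod_pos)
    fix j assume j: "j \<in> {2..<k}"
    have "xk n k < xk n j" using xk_mono[OF assms(1), of j k] j k by auto
    moreover have "xk n j < 1" using one[of j] j k by auto
    ultimately show "0 < - ?f j" by (simp add: divide_pos_neg)
  qed
  have Bpos: "(\<Prod>j\<in>{k<..n}. ?f j) > 0"
  proof (rule prod_pos)
    fix j assume j: "j \<in> {k<..n}"
    have "xk n j < xk n k" using xk_mono[OF assms(1), of k j] j k by auto
    moreover have "xk n j < 1" using one[of j] j k by auto
    ultimately show "0 < ?f j" by simp
  qed
  have e: "(-1::real)^k * (-1)^(k-2) = 1"
  proof -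
    have "(-1::real)^k * (-1)^(k-2) = (-1)^(k + (k-2))" by (simp add: power_add)
    also have "k + (k - 2) = 2 * (k - 1)" using k by simp
    finally show ?thesis by (simp add: power_mult)
  qed
  have "(-1)^k * (\<Prod>j\<in>{2..n}-{k}. ?f j) = ((-1)^k * (-1)^(k-2)) * ((\<Prod>j\<in>{2..<k}. - ?f j) * (\<Prod>j\<in>{k<..n}. ?f j))"
    unfolding P A by (simp only: mult.assoc)
  also have "\<dots> = (\<Prod>j\<in>{2..<k}. - ?f j) * (\<Prod>j\<in>{k<..n}. ?f j)"
    unfolding e by simp
  finally show ?thesis using Apos Bpos by simp
qed

lemma cheb_bound: assumes "-1 \<le> y" "y \<le> 1" shows "\<bar>poly (cheb_T n) y\<bar> \<le> 1"
proof -
  have "y = cos (arccos y)" using assms by (simp add: cos_arccos)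
  then have "poly (cheb_T n) y = cos (real n * arccos y)" by (metis cheb_cos)
  then show ?thesis by simp
qed

lemma FF_bound:
  assumes "n \<ge> 2" "-1 \<le> x" "x \<le> 1"
  shows "0 \<le> poly (FF n) x" "poly (FF n) x \<le> 2 * cc n"
proof -
  have a0: "aa n > 0" using basic(5)[OF assms(1)] .
  have a1: "aa n \<le> 1" unfolding aa_def using cos_le_one[of "pi / real n"] by simp
  have y1: "0 \<le> aa n * (x + 1)" using a0 assms by simp
  have "aa n * (x + 1) \<le> 1 * 2" using a0 a1 assms by (intro mult_mono) auto
  then have "\<bar>poly (cheb_T n) (aa n * (x + 1) - 1)\<bar> \<le> 1" using y1 by (intro cheb_bound) auto
  then show "0 \<le> poly (FF n) x" "poly (FF n) x \<le> 2 * cc n"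
    using basic(6)[OF assms(1)] unfolding poly_FF by (auto simp: abs_le_iff)
qed

lemma poly_FF_S: assumes "n \<ge> 2" shows "poly (FF n) x = (1 - x)^2 * poly (S_extr n) x"
  using S_FF[OF assms] by (simp add: power2_eq_square algebra_simps)

theorem proposition1p5:
  fixes n :: nat and p :: "real poly"
  assumes "n \<ge> 2"
    and "degree p \<le> n - 2"
    and "\<forall>x\<in>{-1..1}. poly p x \<ge> 0"
    and "poly p 1 = 1"
  shows "(SUP x\<in>{-1..1::real}. \<bar>(1 - x)^2 * poly p x\<bar>) \<ge> 16 / (real n)^2 * (tan (pi / (2 * real n)))^2
    \<and> ((SUP x\<in>{-1..1::real}. \<bar>(1 - x)^2 * poly p x\<bar>) = 16 / (real n)^2 * (tan (pi / (2 * real n)))^2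
         \<longleftrightarrow> p = S_extr n)"
proof -
  note n2 = assms(1)
  define M where "M = (SUP x\<in>{-1..1::real}. \<bar>(1 - x)^2 * poly p x\<bar>)"
  define c where "c = cc n"
  define K where "K = {2..n}"
  have c0: "c > 0" using basic(6)[OF n2] by (simp add: c_def)
  have bound: "16 / (real n)^2 * (tan (pi / (2 * real n)))^2 = 2 * c" by (simp add: c_def cc_def)
  have fin: "finite K" by (simp add: K_def)
  have cardK: "card K = n - 1" using n2 by (simp add: K_def)
  have inj: "inj_on (xk n) K"
  proof (rule inj_onI)
    fix i j assume ij: "i \<in> K" "j \<in> K" "xk n i = xk n j"
    show "i = j"
    proof (rule ccontr)
      assume "i \<noteq> j"
      then consider "i < j" | "j < i" by linarith
      then show False using xk_mono[OF n2, of i j] xk_mono[OF n2, of j i] ij by (cases, auto simp: K_def)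
    qed
  qed
  have xr: "-1 \<le> xk n k" "xk n k \<le> 1" "xk n k < 1" if "k \<in> K" for k
  proof -
    show "-1 \<le> xk n k" "xk n k \<le> 1" using xk_range[OF n2, of k] that by (auto simp: K_def)
    show "xk n k < 1" using xk_mono[OF n2, of 1 k] xk_1[OF n2] that by (auto simp: K_def)
  qed
  have bdd: "bdd_above ((\<lambda>x. \<bar>(1 - x)^2 * poly p x\<bar>) ` {-1..1::real})"
  proof -
    have "continuous_on {-1..1::real} (\<lambda>x. \<bar>(1 - x)^2 * poly p x\<bar>)"
      by (intro continuous_intros)
    then have "compact ((\<lambda>x. \<bar>(1 - x)^2 * poly p x\<bar>) ` {-1..1::real})"
      by (intro compact_continuous_image) auto
    then show ?thesis by (intro bounded_imp_bdd_above compact_imp_bounded)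
  qed
  define qk where "qk k = (1 - xk n k)^2 * poly p (xk n k)" for k
  have q_le: "qk k \<le> M" if "k \<in> K" for k
  proof -
    have "\<bar>(1 - xk n k)^2 * poly p (xk n k)\<bar> \<le> M"
      unfolding M_def by (rule cSUP_upper[OF _ bdd]) (use xr[OF that] in auto)
    then show ?thesis unfolding qk_def by simp
  qed
  have q_ge: "qk k \<ge> 0" if "k \<in> K" for k
    using assms(3) xr[OF that] unfolding qk_def by simp
  define P where "P k = (\<Prod>j\<in>K-{k}. (1 - xk n j) / (xk n k - xk n j))" for k
  define w where "w k = P k / (1 - xk n k)^2" for k
  have intp: "poly g 1 = (\<Sum>k\<in>K. poly g (xk n k) * P k)" if "degree g \<le> n - 2" for g
    unfolding P_def by (rule interp[OF fin inj]) (use that cardK n2 in simp)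
  have sq0: "(1 - xk n k)^2 > 0" if "k \<in> K" for k using xr(3)[OF that] by simp
  have sum_q: "(\<Sum>k\<in>K. qk k * w k) = 1"
  proof -
    have "(\<Sum>k\<in>K. qk k * w k) = (\<Sum>k\<in>K. poly p (xk n k) * P k)"
    proof (rule sum.cong[OF refl])
      fix k assume "k \<in> K"
      then show "qk k * w k = poly p (xk n k) * P k" using sq0[of k] unfolding qk_def w_def by (simp add: field_simps)
    qed
    also have "\<dots> = 1" using intp[OF assms(2)] assms(4) by simp
    finally show ?thesis .
  qed
  have Sval: "poly (S_extr n) (xk n k) = c * (1 + (-1)^k) / (1 - xk n k)^2" if "k \<in> K" for k
    using poly_FF_S[OF n2, of "xk n k"] FF_xk[OF n2, of k] sq0[OF that] unfolding c_def by (simp add: field_simps)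
  have sum_S: "(\<Sum>k\<in>K. c * (1 + (-1)^k) * w k) = 1"
  proof -
    have "(\<Sum>k\<in>K. c * (1 + (-1)^k) * w k) = (\<Sum>k\<in>K. poly (S_extr n) (xk n k) * P k)"
    proof (rule sum.cong[OF refl])
      fix k assume "k \<in> K"
      then show "c * (1 + (-1)^k) * w k = poly (S_extr n) (xk n k) * P k" using sq0[of k] Sval[of k] unfolding w_def by (simp add: field_simps)
    qed
    also have "\<dots> = 1" using intp[OF degree_S[OF n2]] S_1[OF n2] by simp
    finally show ?thesis .
  qed
  have sign: "(-1)^k * w k > 0" if "k \<in> K" for k
    using sign_P[OF n2, of k] that sq0[OF that] unfolding w_def P_def K_def by (simp add: divide_pos_pos)
  have key: "qk k * w k \<le> M / (2 * c) * (c * (1 + (-1)^k) * w k)" if k: "k \<in> K" for k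
  proof (cases "even k")
    case True
    then have "w k > 0" using sign[OF k] by simp
    then have "qk k * w k \<le> M * w k" using q_le[OF k] by (simp add: mult_right_mono)
    then show ?thesis using True c0 by simp
  next
    case False
    then have "w k < 0" using sign[OF k] by simp
    then have "qk k * w k \<le> 0" using q_ge[OF k] by (simp add: mult_nonneg_nonpos)
    then show ?thesis using False by simp
  qed
  have "1 \<le> M / (2 * c)"
  proof -
    have "1 = (\<Sum>k\<in>K. qk k * w k)" using sum_q by simp
    also have "\<dots> \<le> (\<Sum>k\<in>K. M / (2 * c) * (c * (1 + (-1)^k) * w k))" by (rule sum_mono) (rule key)
    also have "\<dots> = M / (2 * c)" by (simp only: sum_distrib_left[symmetric] sum_S mult_1_right)
    finally show ?thesis .
  qed
  then have ineq: "M \<ge> 2 * c" using c0 by (simp add: field_simps)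
  have eq: "M = 2 * c \<longleftrightarrow> p = S_extr n"
  proof
    assume M2: "M = 2 * c"
    define d where "d k = M / (2 * c) * (c * (1 + (-1)^k) * w k) - qk k * w k" for k
    have d0: "\<forall>k\<in>K. d k \<ge> 0" using key unfolding d_def by simp
    have "(\<Sum>k\<in>K. d k) = 0"
      unfolding d_def sum_subtractf using sum_S sum_q M2 c0 by (simp add: sum_distrib_left[symmetric])
    then have dz: "\<forall>k\<in>K. d k = 0" using sum_nonneg_eq_0_iff[OF fin] d0 by blast
    have vals: "poly p (xk n k) = poly (S_extr n) (xk n k)" if k: "k \<in> K" for k
    proof -
      have "w k \<noteq> 0" using sign[OF k] by auto
      then have "qk k = c * (1 + (-1)^k)" using dz k M2 c0 unfolding d_def by auto
      moreover have "(1 - xk n k)^2 * poly (S_extr n) (xk n k) = c * (1 + (-1)^k)"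
        using Sval[OF k] sq0[OF k] by simp
      ultimately have "(1 - xk n k)^2 * poly p (xk n k) = (1 - xk n k)^2 * poly (S_extr n) (xk n k)"
        unfolding qk_def by simp
      then show ?thesis using sq0[OF k] by simp
    qed
    show "p = S_extr n"
    proof (rule poly_eqI_degree[where A="xk n ` K"])
      show "\<And>y. y \<in> xk n ` K \<Longrightarrow> poly p y = poly (S_extr n) y" using vals by auto
      show "degree p < card (xk n ` K)" using card_image[OF inj] cardK assms(2) n2 by simp
      show "degree (S_extr n) < card (xk n ` K)" using card_image[OF inj] cardK degree_S[OF n2] n2 by simp
    qed
  next
    assume pS: "p = S_extr n"
    have "M \<le> 2 * c"
      unfolding M_def
    proof (rule cSUP_least)
      fix x :: real assume x: "x \<in> {-1..1}"
      have "\<bar>(1 - x)^2 * poly p x\<bar> = \<bar>poly (FF n) x\<bar>" using poly_FF_S[OF n2, of x] pS by simp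
      also have "\<dots> \<le> 2 * c" using FF_bound[OF n2, of x] x unfolding c_def by auto
      finally show "\<bar>(1 - x)^2 * poly p x\<bar> \<le> 2 * c" .
    qed simp
    moreover have "qk 2 = 2 * c"
      using poly_FF_S[OF n2, of "xk n 2"] FF_xk[OF n2, of 2] pS unfolding qk_def c_def by simp
    moreover have "qk 2 \<le> M" using q_le n2 by (simp add: K_def)
    ultimately show "M = 2 * c" by simp
  qed
  show ?thesis unfolding M_def[symmetric] bound using ineq eq by simp
qed

end
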